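(* In $U(gl(m|n+1))$, each $\tau_k$ ($k\ge0$) can be expressed as a polynomial in the Casimir elements $I_j$ and $\hat I_j$ with $j\le k$, and each $\sigma_\ell$ ($\ell\ge0$) can be expressed as a polynomial in the Casimir elements $I_j$ and $\hat I_j$ with $j\le\ell+2$.
   Context: Over $\mathbb{C}$, $N=m+n+1$, parity $(p)=0$ for $1\le p\le m$, $(p)=1$ for $m<p\le N$. $gl(m|n+1)$ has homogeneous basis $E_{pq}$ ($1\le p,q\le N$) of parity $(p)+(q)$ with graded bracket $[E_{pq},E_{rs}]=\delta_{qr}E_{ps}-(-1)^{((p)+(q))((r)+(s))}\delta_{ps}E_{rq}$; $gl(m|n)$ is the subalgebra spanned by $E_{pq}$ with $p,q\le m+n$. Let $\mathcal B^p_{\ q}=(-1)^{(p)}E_{pq}$ ($1\le p,q\le N$) and let $\mathcal A$ be its upper-left $(m+n)\times(m+n)$ submatrix, $\mathcal A^p_{\ q}=(-1)^{(p)}E_{pq}$ ($1\le p,q\le m+n$). Powers: $(X^k)^p_{\ q}=\sum_rX^p_{\ r}(X^{k-1})^r_{\ q}$ (sum over the index range of $X$), $X^0$ the identity. Define $\tau_k=(\mathcal B^k)^N_{\ N}$, $\sigma_\ell=\sum_{p,q=1}^{m+n}\mathcal B^N_{\ p}(\mathcal A^\ell)^p_{\ q}\mathcal B^q_{\ N}$, and the Casimir elements $\hat I_k=\sum_{p=1}^N(-1)^{(p)}(\mathcal B^k)^p_{\ p}$ of $gl(m|n+1)$ and $I_k=\sum_{p=1}^{m+n}(-1)^{(p)}(\mathcal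 A^k)^p_{\ p}$ of $gl(m|n)$. Polynomials have complex coefficients (which may depend on $m,n$). *)

theory Defs
  imports Complex_Main
begin

definition par :: "nat \<Rightarrow> nat \<Rightarrow> nat" where
  "par m p = (if p \<le> m then 0 else 1)"

text \<open>A unital associative complex algebra structure on a ring 'a:
  a unital ring homomorphism from the complex numbers into the centre.\<close>
definition complex_alg :: "(complex \<Rightarrow> 'a::ring_1) \<Rightarrow> bool" where
  "complex_alg emb \<longleftrightarrow>
     emb 1 = 1 \<and>
     (\<forall>x y. emb (x + y) = emb x + emb y) \<and>
     (\<forall>x y. emb (x * y) = emb x * emb y) \<and>
     (\<forall>x a. emb x * a = a * emb x)"

text \<open>Defining relations of U(gl(m|n+1)) on the images E p q of the basis E_pq
  (1 \<le> p,q \<le> N = m+n+1), i.e. the graded bracket realised by graded commutators.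
  A family satisfying these relations in an associative algebra is the same as an
  algebra homomorphism out of the universal enveloping algebra.\<close>
definition gl_rel :: "nat \<Rightarrow> nat \<Rightarrow> (nat \<Rightarrow> nat \<Rightarrow> 'a::ring_1) \<Rightarrow> bool" where
  "gl_rel m n E \<longleftrightarrow>
     (\<forall>p\<in>{1..m+n+1}. \<forall>q\<in>{1..m+n+1}. \<forall>r\<in>{1..m+n+1}. \<forall>s\<in>{1..m+n+1}.
        E p q * E r s
          - (-1) ^ ((par m p + par m q) * (par m r + par m s)) * (E r s * E p q)
        = (if q = r then E p s else 0)
          - (-1) ^ ((par m p + par m q) * (par m r + par m s)) * (if p = s then E r q else 0))"

definition Bmat :: "nat \<Rightarrow> (nat \<Rightarrow> nat \<Rightarrow> 'a::ring_1) \<Rightarrow> nat \<Rightarrow> nat \<Rightarrow> 'a" where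
  "Bmat m E p q = (-1) ^ par m p * E p q"

fun matpow :: "(nat \<Rightarrow> nat \<Rightarrow> 'a::ring_1) \<Rightarrow> nat \<Rightarrow> nat \<Rightarrow> nat \<Rightarrow> nat \<Rightarrow> 'a" where
  "matpow X d 0 p q = (if p = q then 1 else 0)"
| "matpow X d (Suc k) p q = (\<Sum>r\<in>{1..d}. X p r * matpow X d k r q)"

text \<open>\<A> is the upper-left (m+n)x(m+n) block of \<B>, so its powers are matpow with d = m+n.\<close>

definition tau :: "nat \<Rightarrow> nat \<Rightarrow> (nat \<Rightarrow> nat \<Rightarrow> 'a::ring_1) \<Rightarrow> nat \<Rightarrow> 'a" where
  "tau m n E k = matpow (Bmat m E) (m+n+1) k (m+n+1) (m+n+1)"

definition sigma :: "nat \<Rightarrow> nat \<Rightarrow> (nat \<Rightarrow> nat \<Rightarrow> 'a::ring_1) \<Rightarrow> nat \<Rightarrow> 'a" where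
  "sigma m n E l = (\<Sum>p\<in>{1..m+n}. \<Sum>q\<in>{1..m+n}.
       Bmat m E (m+n+1) p * matpow (Bmat m E) (m+n) l p q * Bmat m E q (m+n+1))"

definition Ihat :: "nat \<Rightarrow> nat \<Rightarrow> (nat \<Rightarrow> nat \<Rightarrow> 'a::ring_1) \<Rightarrow> nat \<Rightarrow> 'a" where
  "Ihat m n E k = (\<Sum>p\<in>{1..m+n+1}. (-1) ^ par m p * matpow (Bmat m E) (m+n+1) k p p)"

definition Icas :: "nat \<Rightarrow> nat \<Rightarrow> (nat \<Rightarrow> nat \<Rightarrow> 'a::ring_1) \<Rightarrow> nat \<Rightarrow> 'a" where
  "Icas m n E k = (\<Sum>p\<in>{1..m+n}. (-1) ^ par m p * matpow (Bmat m E) (m+n) k p p)"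

datatype pexpr = PConst complex | VarI nat | VarIh nat | PAdd pexpr pexpr | PMul pexpr pexpr

fun pvars_le :: "nat \<Rightarrow> pexpr \<Rightarrow> bool" where
  "pvars_le b (PConst c) = True"
| "pvars_le b (VarI j) = (j \<le> b)"
| "pvars_le b (VarIh j) = (j \<le> b)"
| "pvars_le b (PAdd x y) = (pvars_le b x \<and> pvars_le b y)"
| "pvars_le b (PMul x y) = (pvars_le b x \<and> pvars_le b y)"

fun peval :: "(complex \<Rightarrow> 'a::ring_1) \<Rightarrow> (nat \<Rightarrow> 'a) \<Rightarrow> (nat \<Rightarrow> 'a) \<Rightarrow> pexpr \<Rightarrow> 'a" where
  "peval emb I Ih (PConst c) = emb c"
| "peval emb I Ih (VarI j) = I j"
| "peval emb I Ih (VarIh j) = Ih j"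
| "peval emb I Ih (PAdd x y) = peval emb I Ih x + peval emb I Ih y"
| "peval emb I Ih (PMul x y) = peval emb I Ih x * peval emb I Ih y"

end

theory Submission
  imports Defs
begin


definition xs :: "bool \<Rightarrow> 'a::ring_1 \<Rightarrow> 'a" where
  "xs s y = (if s then - y else y)"

lemma xs_simps[simp]:
  "xs False y = y" "xs True y = - y"
  "xs s (x + y) = xs s x + xs s y"
  "xs s (x - y) = xs s x - xs s y"
  "xs s 0 = 0"
  "xs s x * y = xs s (x * y)"
  "x * xs s y = xs s (x * y)"
  "xs s (xs t x) = xs (s \<noteq> t) x"
  "xs s (- x) = - xs s x"
  by (auto simp: xs_def)

lemma mult_delta[simp]: "x * (if c then 1 else 0) = (if c then x else 0)"
  "(if c then 1 else 0) * x = (if c then x else 0)" for x :: "'a::ring_1"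
  by auto

lemma xs_sum: "xs s (sum f A) = sum (\<lambda>i. xs s (f i)) A"
  by (auto simp: xs_def sum_negf)

lemma xs_if: "xs s (if c then x else 0) = (if c then xs s x else 0)"
  by auto

locale glc =
  fixes m n :: nat and E :: "nat \<Rightarrow> nat \<Rightarrow> 'a::ring_1"
  assumes rel: "gl_rel m n E"
begin

abbreviation "M \<equiv> m + n"
abbreviation "N \<equiv> Suc M"
definition Pa :: "nat \<Rightarrow> bool" where "Pa x = (m < x)"
definition S :: "nat \<Rightarrow> nat \<Rightarrow> nat \<Rightarrow> nat \<Rightarrow> bool" where
  "S a b p q = ((Pa a \<noteq> Pa b) \<and> (Pa p \<noteq> Pa q))"
abbreviation "B \<equiv> Bmat m E"

lemma sgn_conv: "(-1::'a) ^ ((par m a + par m b) * (par m p + par m q)) * y = xs (S a b p q) y"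
  by (auto simp: par_def S_def Pa_def xs_def)

lemma B_conv: "B p q = xs (Pa p) (E p q)"
  by (auto simp: Bmat_def par_def Pa_def xs_def)

lemma E_conv: "E p q = xs (Pa p) (B p q)"
  by (simp add: B_conv)

lemma R: assumes "a \<in> {1..N}" "b \<in> {1..N}" "p \<in> {1..N}" "q \<in> {1..N}"
  shows "E a b * E p q = xs (S a b p q) (E p q * E a b) + (if b = p then E a q else 0)
            - xs (S a b p q) (if a = q then E p b else 0)"
proof -
  have "E a b * E p q - (-1) ^ ((par m a + par m b) * (par m p + par m q)) * (E p q * E a b)
        = (if b = p then E a q else 0)
          - (-1) ^ ((par m a + par m b) * (par m p + par m q)) * (if a = q then E p b else 0)"
    using rel assms unfolding gl_rel_def Suc_eq_plus1 by blast
  then show ?thesis unfolding sgn_conv by (simp add: algebra_simps)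
qed

lemma S_simps: "(S a b p r \<noteq> S a b r q) = S a b p q" "S a b p p = False"
  "S a b b a = (Pa a \<noteq> Pa b)"
  by (auto simp: S_def)
lemma S4: "S a b p a = (S a b p b \<noteq> (Pa a \<noteq> Pa b))"
  by (auto simp: S_def)

abbreviation "mp d k \<equiv> matpow B d k"

lemma CL:
  assumes d: "d \<le> N" and ab: "a \<in> {1..d}" "b \<in> {1..d}"
  shows "p \<in> {1..d} \<Longrightarrow> q \<in> {1..d} \<Longrightarrow>
    E a b * mp d k p q = xs (S a b p q) (mp d k p q * E a b)
      + (if b = p then xs (Pa a \<noteq> Pa b) (mp d k a q) else 0)
      - (if a = q then xs (S a b p q) (mp d k p b) else 0)"
proof (induction k arbitrary: p q)
  case 0
  then show ?case by (cases "p = q"; cases "a = q"; cases "b = p") (simp_all add: S_simps)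
next
  case (Suc k)
  have inN: "x \<in> {1..d} \<Longrightarrow> x \<in> {1..N}" for x using d by auto
  have per: "E a b * (B p r * mp d k r q) =
      xs (S a b p q) (B p r * mp d k r q * E a b)
      + (if r = b then xs (S a b p b \<noteq> (Pa a \<noteq> Pa b)) (B p b * mp d k a q) else 0)
      - (if a = q then xs (S a b p q) (B p r * mp d k r b) else 0)
      + (if b = p then xs (Pa a \<noteq> Pa b) (B a r * mp d k r q) else 0)
      - (if r = a then xs (S a b p b \<noteq> (Pa a \<noteq> Pa b)) (B p b * mp d k a q) else 0)"
    if r: "r \<in> {1..d}" for r
  proof -
    have "E a b * (B p r * mp d k r q) = xs (Pa p) ((E a b * E p r) * mp d k r q)"
      by (simp add: B_conv mult.assoc)
    also have "\<dots> = xs (Pa p) ((xs (S a b p r) (E p r * E a b) + (if b = p then E a r else 0)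
            - xs (S a b p r) (if a = r then E p b else 0)) * mp d k r q)"
      using R[OF inN[OF ab(1)] inN[OF ab(2)] inN[OF Suc.prems(1)] inN[OF r]] by simp
    also have "\<dots> = xs (Pa p) (xs (S a b p r) (E p r * (E a b * mp d k r q)))
        + (if b = p then xs (Pa p) (E a r * mp d k r q) else 0)
        - (if a = r then xs (Pa p) (xs (S a b p r) (E p b * mp d k r q)) else 0)"
      by (simp add: algebra_simps)
    also have "E a b * mp d k r q = xs (S a b r q) (mp d k r q * E a b)
      + (if b = r then xs (Pa a \<noteq> Pa b) (mp d k a q) else 0)
      - (if a = q then xs (S a b r q) (mp d k r b) else 0)"
      using Suc.IH[OF r Suc.prems(2)] .
    finally have e: "E a b * (B p r * mp d k r q) = xs (Pa p) (xs (S a b p r) (E p r * (xs (S a b r q) (mp d k r q * E a b)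
      + (if b = r then xs (Pa a \<noteq> Pa b) (mp d k a q) else 0)
      - (if a = q then xs (S a b r q) (mp d k r b) else 0))))
        + (if b = p then xs (Pa p) (E a r * mp d k r q) else 0)
        - (if a = r then xs (Pa p) (xs (S a b p r) (E p b * mp d k r q)) else 0)" .
    show ?thesis unfolding e
      by (cases "Pa a"; cases "Pa b"; cases "Pa p"; cases "Pa q"; cases "Pa r"; auto simp add: E_conv S_def algebra_simps)
  qed
  have "E a b * mp d (Suc k) p q = (\<Sum>r\<in>{1..d}. E a b * (B p r * mp d k r q))"
    by (simp add: sum_distrib_left)
  also have "\<dots> = (\<Sum>r\<in>{1..d}. xs (S a b p q) (B p r * mp d k r q * E a b)
      + (if r = b then xs (S a b p b \<noteq> (Pa a \<noteq> Pa b)) (B p b * mp d k a q) else 0)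
      - (if a = q then xs (S a b p q) (B p r * mp d k r b) else 0)
      + (if b = p then xs (Pa a \<noteq> Pa b) (B a r * mp d k r q) else 0)
      - (if r = a then xs (S a b p b \<noteq> (Pa a \<noteq> Pa b)) (B p b * mp d k a q) else 0))"
    by (rule sum.cong) (auto simp: per)
  also have "\<dots> = xs (S a b p q) (mp d (Suc k) p q * E a b)
      + (if b = p then xs (Pa a \<noteq> Pa b) (mp d (Suc k) a q) else 0)
      - (if a = q then xs (S a b p q) (mp d (Suc k) p b) else 0)"
  proof -
    have h1: "(\<Sum>r\<in>{1..d}. xs (S a b p q) (B p r * mp d k r q * E a b)) = xs (S a b p q) (mp d (Suc k) p q * E a b)"
      by (simp add: xs_sum sum_distrib_right)
    have h2: "(\<Sum>r\<in>{1..d}. (if a = q then xs (S a b p q) (B p r * mp d k r b) else 0)) = (if a = q then xs (S a b p q) (mp d (Suc k) p b) else 0)"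
      by (simp add: xs_sum)
    have h3: "(\<Sum>r\<in>{1..d}. (if b = p then xs (Pa a \<noteq> Pa b) (B a r * mp d k r q) else 0)) = (if b = p then xs (Pa a \<noteq> Pa b) (mp d (Suc k) a q) else 0)"
      by (simp add: xs_sum)
    have h4: "(\<Sum>r\<in>{1..d}. (if r = b then X else 0)) = X" "(\<Sum>r\<in>{1..d}. (if r = a then X else 0)) = X" for X
      using ab by (simp_all add: sum.delta)
    show ?thesis
      by (simp only: sum.distrib sum_subtractf h1 h2 h3 h4) simp
  qed
  finally show ?case .
qed



lemma mp_right: "p \<in> {1..d} \<Longrightarrow> q \<in> {1..d} \<Longrightarrow> mp d (Suc k) p q = (\<Sum>r\<in>{1..d}. mp d k p r * B r q)"
proof (induction k arbitrary: p)
  case 0 then show ?case by (simp add: sum.delta sum.delta')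
next
  case (Suc k)
  have "mp d (Suc (Suc k)) p q = (\<Sum>s\<in>{1..d}. B p s * mp d (Suc k) s q)" by (rule matpow.simps(2))
  also have "\<dots> = (\<Sum>s\<in>{1..d}. B p s * (\<Sum>r\<in>{1..d}. mp d k s r * B r q))"
    by (rule sum.cong[OF refl], rule arg_cong[where f="(*) _"], rule Suc.IH, use Suc.prems in auto)
  also have "\<dots> = (\<Sum>r\<in>{1..d}. (\<Sum>s\<in>{1..d}. B p s * mp d k s r) * B r q)"
    by (simp add: sum_distrib_left sum_distrib_right mult.assoc) (rule sum.swap)
  finally show ?case by simp
qed

abbreviation "A \<equiv> mp M"
lemma PaN: "Pa N" by (simp_all add: Pa_def)
definition d0 where "d0 = B N N"
definition tau' where "tau' j = mp N j N N"
definition u where "u j p = mp N j p N"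
definition Y where "Y l x = (\<Sum>y\<in>{1..M}. B N y * A l y x)"
definition sig where "sig l = (\<Sum>p\<in>{1..M}. \<Sum>q\<in>{1..M}. B N p * A l p q * B q N)"
definition Ic where "Ic k = (\<Sum>p\<in>{1..M}. xs (Pa p) (A k p p))"
definition Ih where "Ih k = (\<Sum>p\<in>{1..N}. xs (Pa p) (mp N k p p))"
definition W where "W j l = (\<Sum>p\<in>{1..M}. xs (Pa p) (u j p * Y l p))"
definition Z where "Z j l = (\<Sum>p\<in>{1..M}. xs (Pa p) (B p N * tau' j * Y l p))"

lemma sig_Y: "sig l = (\<Sum>r\<in>{1..M}. Y l r * B r N)"
  unfolding sig_def Y_def by (simp add: sum_distrib_right) (rule sum.swap)

lemma Y0: "x \<in> {1..M} \<Longrightarrow> Y 0 x = B N x"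
  unfolding Y_def by (simp add: sum.delta)

lemma Y_Suc: "x \<in> {1..M} \<Longrightarrow> Y (Suc l) x = (\<Sum>r\<in>{1..M}. Y l r * B r x)"
proof -
  assume x: "x \<in> {1..M}"
  have "Y (Suc l) x = (\<Sum>y\<in>{1..M}. B N y * (\<Sum>r\<in>{1..M}. A l y r * B r x))"
    unfolding Y_def by (rule sum.cong[OF refl]) (simp add: mp_right[OF _ x] del: matpow.simps)
  also have "\<dots> = (\<Sum>r\<in>{1..M}. Y l r * B r x)"
    unfolding Y_def by (simp add: sum_distrib_left sum_distrib_right mult.assoc) (rule sum.swap)
  finally show ?thesis .
qed

lemma splitN: "(\<Sum>r\<in>{1..N}. f r) = (\<Sum>r\<in>{1..M}. f r) + f N"
  by simp

lemma Ih_split: "Ih k = (\<Sum>p\<in>{1..M}. xs (Pa p) (mp N k p p)) - tau' k"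
  unfolding Ih_def tau'_def by (simp add: PaN)

lemma u0: "p \<in> {1..M} \<Longrightarrow> u 0 p = 0"
  unfolding u_def by simp

lemma u_Suc: "u (Suc j) p = (\<Sum>r\<in>{1..M}. B p r * u j r) + B p N * tau' j"
  unfolding u_def tau'_def by simp

lemma tau_Suc: "tau' (Suc j) = d0 * tau' j + (\<Sum>r\<in>{1..M}. B N r * u j r)"
  unfolding u_def tau'_def d0_def by simp

lemma decomp: "p \<in> {1..M} \<Longrightarrow> q \<in> {1..M} \<Longrightarrow>
   mp N k p q = A k p q + (\<Sum>j<k. u j p * Y (k - 1 - j) q)"
proof (induction k arbitrary: q)
  case 0 then show ?case by simp
next
  case (Suc k)
  have "mp N (Suc k) p q = (\<Sum>r\<in>{1..N}. mp N k p r * B r q)"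
    by (rule mp_right) (use Suc.prems in auto)
  also have "\<dots> = (\<Sum>r\<in>{1..M}. mp N k p r * B r q) + u k p * B N q"
    unfolding splitN u_def ..
  also have "(\<Sum>r\<in>{1..M}. mp N k p r * B r q) = (\<Sum>r\<in>{1..M}. (A k p r + (\<Sum>j<k. u j p * Y (k - 1 - j) r)) * B r q)"
    by (rule sum.cong) (auto simp: Suc.IH[OF Suc.prems(1)])
  also have "\<dots> = A (Suc k) p q + (\<Sum>j<k. u j p * Y (k - j) q)"
  proof -
    have "(\<Sum>r\<in>{1..M}. (\<Sum>j<k. u j p * Y (k - 1 - j) r) * B r q) = (\<Sum>j<k. u j p * (\<Sum>r\<in>{1..M}. Y (k - 1 - j) r * B r q))"
      by (simp add: sum_distrib_right sum_distrib_left mult.assoc) (rule sum.swap)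
    also have "\<dots> = (\<Sum>j<k. u j p * Y (k - j) q)"
    proof (rule sum.cong[OF refl])
      fix x assume "x \<in> {..<k}"
      then have "k - x = Suc (k - 1 - x)" by auto
      then show "u x p * (\<Sum>r\<in>{1..M}. Y (k - 1 - x) r * B r q) = u x p * Y (k - x) q"
        by (simp add: Y_Suc[OF Suc.prems(2)])
    qed
    finally show ?thesis by (simp add: distrib_right sum.distrib mp_right[OF Suc.prems] del: matpow.simps)
  qed
  finally show ?case using Y0[OF Suc.prems(2)] by (simp add: lessThan_Suc)
qed


lemma inM: "x \<in> {1..M} \<Longrightarrow> x \<in> {1..N}" by auto
lemma NM: "x \<in> {1..M} \<Longrightarrow> x \<noteq> N" by auto

lemma u_cov: assumes "a \<in> {1..M}" "b \<in> {1..M}" "x \<in> {1..M}"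
  shows "E a b * u j x = xs (S a b x N) (u j x * E a b) + (if b = x then xs (Pa a \<noteq> Pa b) (u j a) else 0)"
  using CL[of N a b x N j] assms unfolding u_def by auto

lemma tau_inv: assumes "a \<in> {1..M}" "b \<in> {1..M}"
  shows "E a b * tau' j = tau' j * E a b"
  using CL[of N a b N N j] assms unfolding tau'_def by (auto simp: S_simps)

lemma b_tau: assumes "p \<in> {1..M}"
  shows "B p N * tau' j = tau' j * B p N - u j p"
proof -
  have "E p N * tau' j = tau' j * E p N + xs (Pa p \<noteq> Pa N) (u j p)"
    using CL[of N p N N N j] assms unfolding tau'_def u_def by (auto simp: S_simps)
  then show ?thesis unfolding B_conv using PaN by (cases "Pa p") auto
qed

lemma Y_cov: assumes a: "a \<in> {1..M}" and b: "b \<in> {1..M}" and x: "x \<in> {1..M}"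
  shows "E a b * Y l x = xs (S a b N x) (Y l x * E a b) - (if a = x then xs (S a b N x) (Y l b) else 0)"
proof -
  have per: "E a b * (B N y * A l y x) = xs (S a b N x) (B N y * A l y x * E a b)
     + (if y = b then xs (S a b N b \<noteq> (Pa a \<noteq> Pa b)) (B N b * A l a x) else 0)
     - (if a = x then xs (S a b N x) (B N y * A l y b) else 0)
     - (if y = a then xs (S a b N b \<noteq> (Pa a \<noteq> Pa b)) (B N b * A l a x) else 0)"
    if y: "y \<in> {1..M}" for y
  proof -
    have "E a b * (B N y * A l y x) = xs (Pa N) ((E a b * E N y) * A l y x)"
      by (simp add: B_conv mult.assoc)
    also have "\<dots> = xs (Pa N) ((xs (S a b N y) (E N y * E a b) + (if b = N then E a y else 0)
            - xs (S a b N y) (if a = y then E N b else 0)) * A l y x)"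
      using R[OF inM[OF a] inM[OF b] _ inM[OF y]] by simp
    also have "\<dots> = xs (Pa N) (xs (S a b N y) (E N y * (E a b * A l y x)))
        - (if a = y then xs (Pa N) (xs (S a b N y) (E N b * A l y x)) else 0)"
      using b by (simp add: algebra_simps)
    also have "E a b * A l y x = xs (S a b y x) (A l y x * E a b)
      + (if b = y then xs (Pa a \<noteq> Pa b) (A l a x) else 0)
      - (if a = x then xs (S a b y x) (A l y b) else 0)"
      using CL[of M a b y x l] a b x y by simp
    finally have e: "E a b * (B N y * A l y x) = xs (Pa N) (xs (S a b N y) (E N y * (xs (S a b y x) (A l y x * E a b)
      + (if b = y then xs (Pa a \<noteq> Pa b) (A l a x) else 0)
      - (if a = x then xs (S a b y x) (A l y b) else 0))))
        - (if a = y then xs (Pa N) (xs (S a b N y) (E N b * A l y x)) else 0)" .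
    show ?thesis unfolding e
      by (cases "Pa a"; cases "Pa b"; cases "Pa x"; cases "Pa y"; auto simp add: E_conv S_def algebra_simps PaN)
  qed
  have "E a b * Y l x = (\<Sum>y\<in>{1..M}. E a b * (B N y * A l y x))"
    unfolding Y_def by (simp add: sum_distrib_left mult.assoc)
  also have "\<dots> = (\<Sum>y\<in>{1..M}. xs (S a b N x) (B N y * A l y x * E a b)
     + (if y = b then xs (S a b N b \<noteq> (Pa a \<noteq> Pa b)) (B N b * A l a x) else 0)
     - (if a = x then xs (S a b N x) (B N y * A l y b) else 0)
     - (if y = a then xs (S a b N b \<noteq> (Pa a \<noteq> Pa b)) (B N b * A l a x) else 0))"
    by (rule sum.cong) (auto simp: per)
  also have "\<dots> = xs (S a b N x) (Y l x * E a b) - (if a = x then xs (S a b N x) (Y l b) else 0)"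
  proof -
    have h1: "(\<Sum>y\<in>{1..M}. xs (S a b N x) (B N y * A l y x * E a b)) = xs (S a b N x) (Y l x * E a b)"
      unfolding Y_def by (simp add: xs_sum sum_distrib_right)
    have h2: "(\<Sum>y\<in>{1..M}. (if a = x then xs (S a b N x) (B N y * A l y b) else 0)) = (if a = x then xs (S a b N x) (Y l b) else 0)"
      unfolding Y_def by (simp add: xs_sum)
    have h4: "(\<Sum>y\<in>{1..M}. (if y = b then X else 0)) = X" "(\<Sum>y\<in>{1..M}. (if y = a then X else 0)) = X" for X
      using a b by (simp_all add: sum.delta)
    show ?thesis
      by (simp only: sum.distrib sum_subtractf h1 h2 h4) simp
  qed
  finally show ?thesis .
qed

definition G where "G l a x = xs (Pa a) (d0 * A l a x - A (Suc l) a x + (\<Sum>t<l. sig t * A (l - 1 - t) a x))"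

lemma YN: assumes a: "a \<in> {1..M}"
  shows "x \<in> {1..M} \<Longrightarrow> E a N * Y l x = xs (S a N N x) (Y l x * E a N) + G l a x"
proof (induction l arbitrary: x)
  case 0
  have "E a N * E N x = xs (S a N N x) (E N x * E a N) + E a x - xs (S a N N x) (if a = x then E N N else 0)"
    using R[OF inM[OF a] _ _ inM[OF 0]] by simp
  then show ?case using 0 unfolding G_def Y0[OF 0] d0_def
    by (cases "Pa a"; cases "Pa x"; auto simp add: B_conv S_def algebra_simps PaN sum.delta)
next
  case (Suc l)
  have per: "E a N * (Y l r * B r x) = xs (S a N N x) (Y l r * B r x * E a N) + G l a r * B r x
     + (if a = x then xs (Pa a) (Y l r * B r N) else 0)" if r: "r \<in> {1..M}" for r
  proof -
    have "E a N * (Y l r * B r x) = (E a N * Y l r) * B r x" by (simp add: mult.assoc)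
    also have "\<dots> = xs (S a N N r) (Y l r * (E a N * B r x)) + G l a r * B r x"
      by (simp add: Suc.IH[OF r] algebra_simps)
    also have "E a N * B r x = xs (Pa r) (E a N * E r x)" by (simp add: B_conv)
    also have "E a N * E r x = xs (S a N r x) (E r x * E a N) - xs (S a N r x) (if a = x then E r N else 0)"
      using R[OF inM[OF a] _ inM[OF r] inM[OF Suc.prems]] r by auto
    finally show ?thesis
      by (cases "Pa a"; cases "Pa x"; cases "Pa r"; auto simp add: E_conv[of a N] E_conv[of r x] E_conv[of r N] S_def algebra_simps PaN)
  qed
  have "E a N * Y (Suc l) x = (\<Sum>r\<in>{1..M}. E a N * (Y l r * B r x))"
    by (simp add: Y_Suc[OF Suc.prems] sum_distrib_left)
  also have "\<dots> = (\<Sum>r\<in>{1..M}. xs (S a N N x) (Y l r * B r x * E a N) + G l a r * B r x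
     + (if a = x then xs (Pa a) (Y l r * B r N) else 0))"
    by (rule sum.cong) (auto simp: per)
  also have "\<dots> = xs (S a N N x) (Y (Suc l) x * E a N) + (\<Sum>r\<in>{1..M}. G l a r * B r x)
      + (if a = x then xs (Pa a) (sig l) else 0)"
    by (simp add: sum.distrib xs_sum Y_Suc[OF Suc.prems] sum_distrib_right sig_Y)
  finally have c1: "E a N * Y (Suc l) x = xs (S a N N x) (Y (Suc l) x * E a N) + (\<Sum>r\<in>{1..M}. G l a r * B r x)
      + (if a = x then xs (Pa a) (sig l) else 0)" .
  have "(\<Sum>r\<in>{1..M}. G l a r * B r x) + (if a = x then xs (Pa a) (sig l) else 0) = G (Suc l) a x"
  proof -
    have "(\<Sum>r\<in>{1..M}. G l a r * B r x) = xs (Pa a) (d0 * A (Suc l) a x - A (Suc (Suc l)) a x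
        + (\<Sum>t<l. sig t * A (l - t) a x))"
    proof -
      have "(\<Sum>r\<in>{1..M}. G l a r * B r x) = xs (Pa a) (d0 * (\<Sum>r\<in>{1..M}. A l a r * B r x)
          - (\<Sum>r\<in>{1..M}. A (Suc l) a r * B r x) + (\<Sum>t<l. sig t * (\<Sum>r\<in>{1..M}. A (l - 1 - t) a r * B r x)))"
        unfolding G_def by (simp add: xs_sum sum_distrib_left sum_distrib_right algebra_simps sum.distrib sum_subtractf mult.assoc del: matpow.simps) (rule sum.swap)
      also have "\<dots> = xs (Pa a) (d0 * A (Suc l) a x - A (Suc (Suc l)) a x
        + (\<Sum>t<l. sig t * A (Suc (l - 1 - t)) a x))"
        by (simp only: mp_right[OF a Suc.prems, symmetric])
      also have "(\<Sum>t<l. sig t * A (Suc (l - 1 - t)) a x) = (\<Sum>t<l. sig t * A (l - t) a x)"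
        by (rule sum.cong) (auto simp: Suc_diff_Suc)
      finally show ?thesis .
    qed
    then show ?thesis unfolding G_def using Suc.prems
      by (simp add: lessThan_Suc algebra_simps del: matpow.simps) (simp add: xs_def)
  qed
  then show ?case using c1 by (simp add: add.assoc)
qed


lemma tau0: "tau' 0 = 1" unfolding tau'_def by simp
lemma tau1: "tau' 1 = d0" unfolding tau'_def d0_def by (simp add: sum.delta)

lemma Z0: "Z 0 l = - sig l + d0 * Ic l - Ic (Suc l) + (\<Sum>t<l. sig t * Ic (l - 1 - t))"
proof -
  have per: "xs (Pa p) (B p N * tau' 0 * Y l p) = - (Y l p * B p N) + G l p p" if p: "p \<in> {1..M}" for p
  proof -
    have "xs (Pa p) (B p N * tau' 0 * Y l p) = E p N * Y l p"
      by (simp add: tau0 B_conv)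
    also have "\<dots> = xs (S p N N p) (Y l p * E p N) + G l p p" by (rule YN[OF p p])
    finally show ?thesis using PaN by (cases "Pa p") (auto simp: S_def E_conv[of p N])
  qed
  have "Z 0 l = (\<Sum>p\<in>{1..M}. - (Y l p * B p N) + G l p p)"
    unfolding Z_def by (rule sum.cong) (auto simp: per)
  also have "\<dots> = - sig l + (\<Sum>p\<in>{1..M}. G l p p)"
    by (simp add: sum.distrib sig_Y sum_negf sum_subtractf)
  also have "(\<Sum>p\<in>{1..M}. G l p p) = d0 * Ic l - Ic (Suc l) + (\<Sum>t<l. sig t * Ic (l - 1 - t))"
    unfolding G_def Ic_def
    by (simp add: xs_sum sum.distrib sum_subtractf sum_distrib_left del: matpow.simps) (rule sum.swap)
  finally show ?thesis by (simp add: algebra_simps)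
qed

lemma W_Suc: "W (Suc j) l = W j (Suc l) + Z j l"
proof -
  have per: "xs (Pa p) (B p r * u j r * Y l p) = xs (Pa r) (u j r * (Y l p * B p r))
     - xs (Pa p \<noteq> Pa r) (u j r * Y l r) + xs (Pa p \<noteq> Pa r) (u j p * Y l p)"
    if p: "p \<in> {1..M}" and r: "r \<in> {1..M}" for p r
  proof -
    have "xs (Pa p) (B p r * u j r * Y l p) = (E p r * u j r) * Y l p"
      by (simp add: B_conv)
    also have "\<dots> = xs (S p r r N) (u j r * (E p r * Y l p)) + xs (Pa p \<noteq> Pa r) (u j p * Y l p)"
      by (simp add: u_cov[OF p r r] algebra_simps)
    also have "E p r * Y l p = xs (S p r N p) (Y l p * E p r) - xs (S p r N p) (Y l r)"
      by (simp add: Y_cov[OF p r p])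
    finally show ?thesis using PaN
      by (cases "Pa p"; cases "Pa r"; auto simp: S_def E_conv[of p r] algebra_simps)
  qed
  have "W (Suc j) l = (\<Sum>p\<in>{1..M}. \<Sum>r\<in>{1..M}. xs (Pa p) (B p r * u j r * Y l p)) + Z j l"
    unfolding W_def Z_def u_Suc by (simp add: sum.distrib xs_sum sum_distrib_right distrib_right)
  also have "(\<Sum>p\<in>{1..M}. \<Sum>r\<in>{1..M}. xs (Pa p) (B p r * u j r * Y l p)) =
     (\<Sum>p\<in>{1..M}. \<Sum>r\<in>{1..M}. xs (Pa r) (u j r * (Y l p * B p r)))
     - (\<Sum>p\<in>{1..M}. \<Sum>r\<in>{1..M}. xs (Pa p \<noteq> Pa r) (u j r * Y l r))
     + (\<Sum>p\<in>{1..M}. \<Sum>r\<in>{1..M}. xs (Pa p \<noteq> Pa r) (u j p * Y l p))"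
    by (simp add: per sum.distrib sum_subtractf)
  also have "(\<Sum>p\<in>{1..M}. \<Sum>r\<in>{1..M}. xs (Pa p \<noteq> Pa r) (u j r * Y l r))
     = (\<Sum>p\<in>{1..M}. \<Sum>r\<in>{1..M}. xs (Pa p \<noteq> Pa r) (u j p * Y l p))"
    by (subst sum.swap) (rule sum.cong[OF refl], rule sum.cong[OF refl], simp add: xs_def)
  also have "(\<Sum>p\<in>{1..M}. \<Sum>r\<in>{1..M}. xs (Pa r) (u j r * (Y l p * B p r))) = W j (Suc l)"
  proof -
    have "(\<Sum>p\<in>{1..M}. \<Sum>r\<in>{1..M}. xs (Pa r) (u j r * (Y l p * B p r)))
        = (\<Sum>r\<in>{1..M}. xs (Pa r) (u j r * (\<Sum>p\<in>{1..M}. Y l p * B p r)))"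
      by (subst sum.swap) (simp add: xs_sum sum_distrib_left)
    also have "\<dots> = W j (Suc l)" unfolding W_def
      by (rule sum.cong) (auto simp: Y_Suc)
    finally show ?thesis .
  qed
  finally show ?thesis by simp
qed

lemma Z_form: "Z j l = tau' j * Z 0 l - W j l"
proof -
  have "Z j l = (\<Sum>p\<in>{1..M}. xs (Pa p) ((tau' j * B p N - u j p) * Y l p))"
    unfolding Z_def by (rule sum.cong) (auto simp: b_tau)
  then show ?thesis unfolding Z_def W_def tau0
    by (simp add: algebra_simps sum_subtractf sum_distrib_left xs_sum)
qed

lemma W0: "W 0 l = 0" unfolding W_def by (simp add: u0)

lemma W_closed: "W j l = (\<Sum>t<j. Z t (l + j - 1 - t))"
proof (induction j arbitrary: l)
  case 0 then show ?case by (simp add: W0)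
next
  case (Suc j)
  have "(\<Sum>t<j. Z t (Suc l + j - 1 - t)) = (\<Sum>t<j. Z t (l + Suc j - 1 - t))"
    by (rule sum.cong) auto
  then show ?case by (simp add: W_Suc Suc.IH)
qed

lemma Ih_form: "Ih k = Ic k + (\<Sum>j<k. W j (k - 1 - j)) - tau' k"
proof -
  have "Ih k = (\<Sum>p\<in>{1..M}. xs (Pa p) (A k p p + (\<Sum>j<k. u j p * Y (k - 1 - j) p))) - tau' k"
    unfolding Ih_split by (simp add: decomp del: matpow.simps)
  also have "\<dots> = Ic k + (\<Sum>j<k. W j (k - 1 - j)) - tau' k"
    unfolding Ic_def W_def by (simp add: sum.distrib xs_sum del: matpow.simps) (rule sum.swap)
  finally show ?thesis .
qed

definition V where "V l j = (\<Sum>r\<in>{1..M}. Y l r * u j r)"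

lemma V_closed: "V l j = (\<Sum>i<j. sig (l + i) * tau' (j - 1 - i))"
proof (induction j arbitrary: l)
  case 0 then show ?case by (simp add: V_def u0)
next
  case (Suc j)
  have "V l (Suc j) = (\<Sum>s\<in>{1..M}. (\<Sum>r\<in>{1..M}. Y l r * B r s) * u j s) + sig l * tau' j"
    unfolding V_def u_Suc sig_Y
    by (simp add: sum.distrib distrib_left sum_distrib_left sum_distrib_right mult.assoc) (rule sum.swap)
  also have "(\<Sum>s\<in>{1..M}. (\<Sum>r\<in>{1..M}. Y l r * B r s) * u j s) = V (Suc l) j"
    unfolding V_def by (rule sum.cong) (auto simp: Y_Suc)
  finally show ?case unfolding sum.lessThan_Suc_shift by (simp add: Suc.IH add.commute)
qed

lemma tau_form: "tau' (Suc j) = d0 * tau' j + (\<Sum>i<j. sig i * tau' (j - 1 - i))"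
proof -
  have "(\<Sum>r\<in>{1..M}. B N r * u j r) = V 0 j"
    unfolding V_def by (rule sum.cong) (auto simp: Y0)
  then show ?thesis by (simp add: tau_Suc V_closed)
qed


definition R0 where "R0 L = d0 * Ic L - Ic (Suc L) + (\<Sum>t<L. sig t * Ic (L - 1 - t))"

lemma key: "of_nat (Suc (Suc L)) * sig L = Ic (Suc (Suc L)) - Ih (Suc (Suc L)) + of_nat (Suc L) * R0 L
    + (\<Sum>j<Suc L. \<Sum>t<j. Z (Suc t) (L - 1 - t)) - d0 * tau' (Suc L) - (\<Sum>i<L. sig i * tau' (L - i))"
proof -
  define K where "K = Suc L"
  have Wj: "W j (K - j) = (\<Sum>t<j. Z t (L - t))" if "j < Suc K" for j
    using that unfolding W_closed K_def by (intro sum.cong) auto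
  have "(\<Sum>j<Suc K. W j (K - 1 + 1 - j)) = (\<Sum>j<Suc K. \<Sum>t<j. Z t (L - t))"
    using Wj K_def by (intro sum.cong) auto
  also have "\<dots> = (\<Sum>j<K. \<Sum>t<Suc j. Z t (L - t))"
    by (simp only: sum.lessThan_Suc_shift) simp
  also have "\<dots> = (\<Sum>j<K. Z 0 L + (\<Sum>t<j. Z (Suc t) (L - 1 - t)))"
    by (simp only: sum.lessThan_Suc_shift) (simp add: add.commute)
  also have "\<dots> = of_nat K * Z 0 L + (\<Sum>j<K. \<Sum>t<j. Z (Suc t) (L - 1 - t))"
    by (simp add: sum.distrib)
  finally have sW: "(\<Sum>j<Suc K. W j (K - 1 + 1 - j)) = of_nat K * Z 0 L + (\<Sum>j<K. \<Sum>t<j. Z (Suc t) (L - 1 - t))" .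
  have IhK: "Ih (Suc K) = Ic (Suc K) + (\<Sum>j<Suc K. W j (K - 1 + 1 - j)) - tau' (Suc K)"
    using Ih_form[of "Suc K"] K_def by simp
  have tK: "tau' (Suc K) = d0 * tau' K + (\<Sum>i<L. sig i * tau' (L - i)) + sig L"
    unfolding tau_form K_def by (simp add: tau0)
  have Z0L: "Z 0 L = - sig L + R0 L" unfolding Z0 R0_def by (simp add: algebra_simps)
  have "Ih (Suc K) = Ic (Suc K) + of_nat K * (- sig L + R0 L) + (\<Sum>j<K. \<Sum>t<j. Z (Suc t) (L - 1 - t))
       - (d0 * tau' K + (\<Sum>i<L. sig i * tau' (L - i)) + sig L)"
    unfolding IhK sW tK Z0L by (simp add: add.assoc)
  then have "of_nat (Suc K) * sig L = Ic (Suc K) - Ih (Suc K) + of_nat K * R0 L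
    + (\<Sum>j<K. \<Sum>t<j. Z (Suc t) (L - 1 - t)) - d0 * tau' K - (\<Sum>i<L. sig i * tau' (L - i))"
    by (simp add: algebra_simps)
  then show ?thesis unfolding K_def .
qed

end



definition rep :: "nat \<Rightarrow> nat \<Rightarrow> nat \<Rightarrow> ((complex \<Rightarrow> 'a::ring_1) \<Rightarrow> (nat \<Rightarrow> nat \<Rightarrow> 'a) \<Rightarrow> 'a) \<Rightarrow> bool" where
  "rep m n b f \<longleftrightarrow> (\<exists>P. pvars_le b P \<and> (\<forall>emb E. complex_alg emb \<and> gl_rel m n E \<longrightarrow>
      f emb E = peval emb (Icas m n E) (Ihat m n E) P))"

lemma pvars_le_mono: "pvars_le b P \<Longrightarrow> b \<le> c \<Longrightarrow> pvars_le c P"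
  by (induction P) auto

lemma rep_mono: "rep m n b f \<Longrightarrow> b \<le> c \<Longrightarrow> rep m n c f"
  unfolding rep_def using pvars_le_mono by blast

lemma emb0: "complex_alg emb \<Longrightarrow> emb 0 = 0"
  unfolding complex_alg_def by (metis add_cancel_right_right add_0)

lemma emb_neg1: "complex_alg emb \<Longrightarrow> emb (-1) = -1"
proof -
  assume a: "complex_alg emb"
  have "emb (-1) + emb 1 = emb 0" using a unfolding complex_alg_def by (metis add.left_inverse)
  then show ?thesis using a emb0[OF a] unfolding complex_alg_def by (simp add: eq_neg_iff_add_eq_0)
qed

lemma emb_nat: "complex_alg emb \<Longrightarrow> emb (of_nat k) = of_nat k"
proof (induction k)
  case 0 then show ?case by (simp add: emb0)
next
  case (Suc k) then show ?case unfolding complex_alg_def by (metis of_nat_Suc add.commute)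
qed

lemma rep_const: "rep m n b (\<lambda>emb E. emb c)"
  unfolding rep_def by (rule exI[of _ "PConst c"]) simp

lemma rep_one: "rep m n b (\<lambda>emb E. 1)"
  unfolding rep_def by (rule exI[of _ "PConst 1"]) (simp add: complex_alg_def)

lemma rep_zero: "rep m n b (\<lambda>emb E. 0)"
  unfolding rep_def by (rule exI[of _ "PConst 0"]) (simp add: emb0)

lemma rep_add: "rep m n b f \<Longrightarrow> rep m n b g \<Longrightarrow> rep m n b (\<lambda>emb E. f emb E + g emb E)"
  unfolding rep_def
  apply (elim exE conjE)
  subgoal for P Q by (rule exI[of _ "PAdd P Q"]) simp
  done

lemma rep_mult: "rep m n b f \<Longrightarrow> rep m n b g \<Longrightarrow> rep m n b (\<lambda>emb E. f emb E * g emb E)"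
  unfolding rep_def
  apply (elim exE conjE)
  subgoal for P Q by (rule exI[of _ "PMul P Q"]) simp
  done

lemma rep_neg: "rep m n b f \<Longrightarrow> rep m n b (\<lambda>emb E. - f emb E)"
  unfolding rep_def
  apply (elim exE conjE)
  subgoal for P by (rule exI[of _ "PMul (PConst (-1)) P"]) (simp add: emb_neg1)
  done

lemma rep_diff: "rep m n b f \<Longrightarrow> rep m n b g \<Longrightarrow> rep m n b (\<lambda>emb E. f emb E - g emb E)"
  using rep_add[OF _ rep_neg, of m n b f g] by simp

lemma rep_nat: "rep m n b f \<Longrightarrow> rep m n b (\<lambda>emb E. of_nat k * f emb E)"
  unfolding rep_def
  apply (elim exE conjE)
  subgoal for P by (rule exI[of _ "PMul (PConst (of_nat k)) P"]) (simp add: emb_nat)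
  done

lemma rep_sum: "finite A \<Longrightarrow> (\<And>i. i \<in> A \<Longrightarrow> rep m n b (f i)) \<Longrightarrow> rep m n b (\<lambda>emb E. \<Sum>i\<in>A. f i emb E)"
proof (induction A rule: finite_induct)
  case empty then show ?case by (simp add: rep_zero)
next
  case (insert x F) then show ?case by (simp add: rep_add)
qed

lemma rep_sum_lt: "(\<And>i. i < (k::nat) \<Longrightarrow> rep m n b (f i)) \<Longrightarrow> rep m n b (\<lambda>emb E. \<Sum>i<k. f i emb E)"
  using rep_sum[of "{..<k}" m n b f] by auto

lemma glcI: "gl_rel m n E \<Longrightarrow> glc m n E" unfolding glc_def .

lemma par_xs: "(-1) ^ par m p * x = xs (m < p) x"
  by (simp add: par_def xs_def)

lemma bridge: assumes "gl_rel m n E"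
  shows "glc.Ic m n E j = Icas m n E j" "glc.Ih m n E j = Ihat m n E j"
    "glc.tau' m n E j = tau m n E j" "glc.sig m n E j = sigma m n E j"
  using assms
  by (simp_all add: glc_def glc.Ic_def glc.Ih_def glc.tau'_def glc.sig_def glc.Pa_def
        Icas_def Ihat_def tau_def sigma_def par_xs)

lemma rep_Ic: "j \<le> b \<Longrightarrow> rep m n b (\<lambda>emb E. glc.Ic m n E j)"
  unfolding rep_def
  by (rule exI[of _ "VarI j"]) (auto simp: bridge)

lemma rep_Ih: "j \<le> b \<Longrightarrow> rep m n b (\<lambda>emb E. glc.Ih m n E j)"
  unfolding rep_def
  by (rule exI[of _ "VarIh j"]) (auto simp: bridge)


lemma rep_cong: "rep m n b f \<Longrightarrow> (\<And>emb E. complex_alg emb \<Longrightarrow> gl_rel m n E \<Longrightarrow> g emb E = f emb E) \<Longrightarrow> rep m n b g"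
  unfolding rep_def by metis

definition Inv :: "nat \<Rightarrow> nat \<Rightarrow> nat \<Rightarrow> 'a::ring_1 itself \<Rightarrow> bool" where
  "Inv m n K (ty::'a itself) \<longleftrightarrow> (\<forall>t\<le>K. rep m n K (\<lambda>(emb::complex\<Rightarrow>'a) E. glc.tau' m n E t))
     \<and> (\<forall>t. t + 2 \<le> K \<longrightarrow> rep m n K (\<lambda>(emb::complex\<Rightarrow>'a) E. glc.sig m n E t))"

lemma InvT: "Inv m n K TYPE('a::ring_1) \<Longrightarrow> t \<le> K \<Longrightarrow> rep m n K (\<lambda>(emb::complex\<Rightarrow>'a) E. glc.tau' m n E t)"
  unfolding Inv_def by blast
lemma InvS: "Inv m n K TYPE('a::ring_1) \<Longrightarrow> t + 2 \<le> K \<Longrightarrow> rep m n K (\<lambda>(emb::complex\<Rightarrow>'a) E. glc.sig m n E t)"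
  unfolding Inv_def by blast

lemma Z0rep: assumes I: "Inv m n K TYPE('a::ring_1)" and l: "l + 2 \<le> K"
  shows "rep m n K (\<lambda>(emb::complex\<Rightarrow>'a) E. glc.Z m n E 0 l)"
proof (rule rep_cong)
  show "rep m n K (\<lambda>(emb::complex\<Rightarrow>'a) E. - glc.sig m n E l + glc.tau' m n E 1 * glc.Ic m n E l - glc.Ic m n E (Suc l)
      + (\<Sum>t<l. glc.sig m n E t * glc.Ic m n E (l - 1 - t)))"
    using l
    by (intro rep_add rep_diff rep_neg rep_mult rep_sum_lt InvS[OF I] InvT[OF I] rep_Ic) auto
  show "glc.Z m n E 0 l = - glc.sig m n E l + glc.tau' m n E 1 * glc.Ic m n E l - glc.Ic m n E (Suc l)
      + (\<Sum>t<l. glc.sig m n E t * glc.Ic m n E (l - 1 - t))" if "gl_rel m n E" for E :: "nat \<Rightarrow> nat \<Rightarrow> 'a"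
    using glc.Z0[OF glcI[OF that]] glc.tau1[OF glcI[OF that]] by simp
qed

lemma ZWrep: assumes I: "Inv m n K TYPE('a::ring_1)"
  shows "\<forall>l. (j + l + 1 \<le> K \<longrightarrow> rep m n K (\<lambda>(emb::complex\<Rightarrow>'a) E. glc.W m n E j l))
           \<and> (j + l + 2 \<le> K \<longrightarrow> rep m n K (\<lambda>(emb::complex\<Rightarrow>'a) E. glc.Z m n E j l))"
proof (induction j rule: less_induct)
  case (less j)
  have Wr: "rep m n K (\<lambda>(emb::complex\<Rightarrow>'a) E. glc.W m n E j l)" if jl: "j + l + 1 \<le> K" for l
  proof (rule rep_cong)
    show "rep m n K (\<lambda>(emb::complex\<Rightarrow>'a) E. \<Sum>t<j. glc.Z m n E t (l + j - 1 - t))"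
    proof (rule rep_sum_lt)
      fix t assume "t < j"
      then show "rep m n K (\<lambda>(emb::complex\<Rightarrow>'a) E. glc.Z m n E t (l + j - 1 - t))"
        using less.IH[of t] jl by auto
    qed
    show "glc.W m n E j l = (\<Sum>t<j. glc.Z m n E t (l + j - 1 - t))" if "gl_rel m n E" for E :: "nat \<Rightarrow> nat \<Rightarrow> 'a"
      using glc.W_closed[OF glcI[OF that]] by simp
  qed
  have Zr: "rep m n K (\<lambda>(emb::complex\<Rightarrow>'a) E. glc.Z m n E j l)" if jl: "j + l + 2 \<le> K" for l
  proof (rule rep_cong)
    show "rep m n K (\<lambda>(emb::complex\<Rightarrow>'a) E. glc.tau' m n E j * glc.Z m n E 0 l - glc.W m n E j l)"
      using jl by (intro rep_diff[OF rep_mult[OF InvT[OF I] Z0rep[OF I]] Wr]) auto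
    show "glc.Z m n E j l = glc.tau' m n E j * glc.Z m n E 0 l - glc.W m n E j l" if "gl_rel m n E" for E :: "nat \<Rightarrow> nat \<Rightarrow> 'a"
      by (rule glc.Z_form[OF glcI[OF that]])
  qed
  show ?case using Wr Zr by blast
qed

lemma Inv1: "Inv m n 1 TYPE('a::ring_1)"
proof -
  have t0: "rep m n 1 (\<lambda>(emb::complex\<Rightarrow>'a) E. glc.tau' m n E 0)"
    by (rule rep_cong[OF rep_one]) (simp add: glc.tau0[OF glcI])
  have t1: "rep m n 1 (\<lambda>(emb::complex\<Rightarrow>'a) E. glc.tau' m n E 1)"
  proof (rule rep_cong)
    show "rep m n 1 (\<lambda>(emb::complex\<Rightarrow>'a) E. glc.Ic m n E 1 - glc.Ih m n E 1)"
      by (intro rep_diff rep_Ic rep_Ih) auto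
    show "glc.tau' m n E 1 = glc.Ic m n E 1 - glc.Ih m n E 1" if "gl_rel m n E" for E :: "nat \<Rightarrow> nat \<Rightarrow> 'a"
      using glc.Ih_form[OF glcI[OF that], of 1] glc.W0[OF glcI[OF that]] by simp
  qed
  show ?thesis unfolding Inv_def using t0 t1 by (auto simp: le_Suc_eq)
qed

lemma emb_inv: assumes a: "complex_alg emb" shows "emb (inverse (of_nat (Suc K))) * of_nat (Suc K) = 1"
proof -
  have m: "emb (x * y) = emb x * emb y" for x y using a unfolding complex_alg_def by blast
  have o: "emb 1 = 1" using a unfolding complex_alg_def by blast
  have nz: "(of_nat (Suc K)::complex) \<noteq> 0" using of_nat_eq_0_iff[of "Suc K"] by blast
  have c: "inverse (of_nat (Suc K)) * of_nat (Suc K) = (1::complex)"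
    by (rule left_inverse[OF nz])
  have "emb (inverse (of_nat (Suc K))) * of_nat (Suc K) = emb (inverse (of_nat (Suc K))) * emb (of_nat (Suc K))"
    using emb_nat[OF a, of "Suc K"] by simp
  also have "\<dots> = 1" unfolding m[symmetric] c o ..
  finally show ?thesis .
qed

lemma Inv_step: assumes I: "Inv m n (Suc L) TYPE('a::ring_1)"
  shows "Inv m n (Suc (Suc L)) TYPE('a)"
proof -
  define K where "K = Suc L"
  have IK: "Inv m n K TYPE('a)" using I K_def by simp
  note ZW = ZWrep[OF IK]
  have mono: "rep m n K f \<Longrightarrow> rep m n (Suc K) f" for f :: "(complex \<Rightarrow> 'a) \<Rightarrow> _"
    by (erule rep_mono) simp
  have Tle: "rep m n (Suc K) (\<lambda>(emb::complex\<Rightarrow>'a) E. glc.tau' m n E t)" if "t \<le> K" for t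
    using that by (intro mono InvT[OF IK])
  have Sle: "rep m n (Suc K) (\<lambda>(emb::complex\<Rightarrow>'a) E. glc.sig m n E t)" if "t + 2 \<le> K" for t
    using that by (intro mono InvS[OF IK])
  have Icl: "rep m n (Suc K) (\<lambda>(emb::complex\<Rightarrow>'a) E. glc.Ic m n E t)" if "t \<le> Suc K" for t
    using that by (rule rep_Ic)
  have Ihl: "rep m n (Suc K) (\<lambda>(emb::complex\<Rightarrow>'a) E. glc.Ih m n E t)" if "t \<le> Suc K" for t
    using that by (rule rep_Ih)
  have R0r: "rep m n (Suc K) (\<lambda>(emb::complex\<Rightarrow>'a) E. glc.R0 m n E L)"
  proof (rule rep_cong)
    show "rep m n (Suc K) (\<lambda>(emb::complex\<Rightarrow>'a) E. glc.tau' m n E 1 * glc.Ic m n E L - glc.Ic m n E (Suc L)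
        + (\<Sum>t<L. glc.sig m n E t * glc.Ic m n E (L - 1 - t)))"
      by (intro rep_add rep_diff rep_mult rep_sum_lt Icl Tle Sle) (auto simp: K_def)
    show "glc.R0 m n E L = glc.tau' m n E 1 * glc.Ic m n E L - glc.Ic m n E (Suc L)
        + (\<Sum>t<L. glc.sig m n E t * glc.Ic m n E (L - 1 - t))" if "gl_rel m n E" for E :: "nat \<Rightarrow> nat \<Rightarrow> 'a"
      using glc.R0_def[OF glcI[OF that]] glc.tau1[OF glcI[OF that]] by simp
  qed
  have Zr: "rep m n (Suc K) (\<lambda>(emb::complex\<Rightarrow>'a) E. glc.Z m n E (Suc t) (L - 1 - t))" if t: "t < L" for t
  proof (rule rep_cong)
    have a: "rep m n (Suc K) (\<lambda>(emb::complex\<Rightarrow>'a) E. glc.Z m n E 0 (L - 1 - t))"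
      using t ZW[rule_format, of 0 "L - 1 - t"] by (intro mono) (auto simp: K_def)
    have b: "rep m n (Suc K) (\<lambda>(emb::complex\<Rightarrow>'a) E. glc.W m n E (Suc t) (L - 1 - t))"
      using t ZW[rule_format, of "Suc t" "L - 1 - t"] by (intro mono) (auto simp: K_def)
    show "rep m n (Suc K) (\<lambda>(emb::complex\<Rightarrow>'a) E. glc.tau' m n E (Suc t) * glc.Z m n E 0 (L - 1 - t) - glc.W m n E (Suc t) (L - 1 - t))"
      using t by (intro rep_diff rep_mult a b Tle) (auto simp: K_def)
    show "glc.Z m n E (Suc t) (L - 1 - t) = glc.tau' m n E (Suc t) * glc.Z m n E 0 (L - 1 - t) - glc.W m n E (Suc t) (L - 1 - t)"
      if "gl_rel m n E" for E :: "nat \<Rightarrow> nat \<Rightarrow> 'a"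
      by (rule glc.Z_form[OF glcI[OF that]])
  qed
  have X: "rep m n (Suc K) (\<lambda>(emb::complex\<Rightarrow>'a) E. glc.Ic m n E (Suc K) - glc.Ih m n E (Suc K) + of_nat K * glc.R0 m n E L
    + (\<Sum>j<K. \<Sum>t<j. glc.Z m n E (Suc t) (L - 1 - t)) - glc.tau' m n E 1 * glc.tau' m n E K
    - (\<Sum>i<L. glc.sig m n E i * glc.tau' m n E (L - i)))"
  proof -
    have dd: "rep m n (Suc K) (\<lambda>(emb::complex\<Rightarrow>'a) E. \<Sum>j<K. \<Sum>t<j. glc.Z m n E (Suc t) (L - 1 - t))"
    proof (rule rep_sum_lt, rule rep_sum_lt)
      fix j t assume "j < K" "t < j" then show "rep m n (Suc K) (\<lambda>(emb::complex\<Rightarrow>'a) E. glc.Z m n E (Suc t) (L - 1 - t))"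
        by (intro Zr) (auto simp: K_def)
    qed
    have ss: "rep m n (Suc K) (\<lambda>(emb::complex\<Rightarrow>'a) E. \<Sum>i<L. glc.sig m n E i * glc.tau' m n E (L - i))"
      by (intro rep_sum_lt rep_mult Sle Tle) (auto simp: K_def)
    show ?thesis
      by (intro rep_add rep_diff rep_nat rep_mult Icl Ihl R0r dd ss Tle) (auto simp: K_def)
  qed
  have S: "rep m n (Suc K) (\<lambda>(emb::complex\<Rightarrow>'a) E. glc.sig m n E L)"
  proof (rule rep_cong)
    show "rep m n (Suc K) (\<lambda>(emb::complex\<Rightarrow>'a) E. emb (inverse (of_nat (Suc K))) * (glc.Ic m n E (Suc K) - glc.Ih m n E (Suc K) + of_nat K * glc.R0 m n E L
    + (\<Sum>j<K. \<Sum>t<j. glc.Z m n E (Suc t) (L - 1 - t)) - glc.tau' m n E 1 * glc.tau' m n E K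
    - (\<Sum>i<L. glc.sig m n E i * glc.tau' m n E (L - i))))"
      by (rule rep_mult[OF rep_const X])
    fix emb :: "complex \<Rightarrow> 'a" and E :: "nat \<Rightarrow> nat \<Rightarrow> 'a" assume e: "complex_alg emb" and g: "gl_rel m n E"
    have k: "of_nat (Suc K) * glc.sig m n E L = glc.Ic m n E (Suc K) - glc.Ih m n E (Suc K) + of_nat K * glc.R0 m n E L
    + (\<Sum>j<K. \<Sum>t<j. glc.Z m n E (Suc t) (L - 1 - t)) - glc.tau' m n E 1 * glc.tau' m n E K
    - (\<Sum>i<L. glc.sig m n E i * glc.tau' m n E (L - i))"
      unfolding K_def by (rule glc.key[OF glcI[OF g], of L, unfolded glc.tau1[OF glcI[OF g], symmetric]])
    show "glc.sig m n E L = emb (inverse (of_nat (Suc K))) * (glc.Ic m n E (Suc K) - glc.Ih m n E (Suc K) + of_nat K * glc.R0 m n E L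
    + (\<Sum>j<K. \<Sum>t<j. glc.Z m n E (Suc t) (L - 1 - t)) - glc.tau' m n E 1 * glc.tau' m n E K
    - (\<Sum>i<L. glc.sig m n E i * glc.tau' m n E (L - i)))"
      unfolding k[symmetric] mult.assoc[symmetric] emb_inv[OF e] by simp
  qed
  have T: "rep m n (Suc K) (\<lambda>(emb::complex\<Rightarrow>'a) E. glc.tau' m n E (Suc K))"
  proof (rule rep_cong)
    show "rep m n (Suc K) (\<lambda>(emb::complex\<Rightarrow>'a) E. glc.tau' m n E 1 * glc.tau' m n E K + (\<Sum>i<K. glc.sig m n E i * glc.tau' m n E (K - 1 - i)))"
    proof (intro rep_add rep_mult rep_sum_lt Tle)
      fix i assume i: "i < K"
      show "rep m n (Suc K) (\<lambda>(emb::complex\<Rightarrow>'a) E. glc.sig m n E i)"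
      proof (cases "i = L")
        case True then show ?thesis using S by simp
      next
        case False then show ?thesis using i by (intro Sle) (auto simp: K_def)
      qed
    qed (auto simp: K_def)

    show "glc.tau' m n E (Suc K) = glc.tau' m n E 1 * glc.tau' m n E K + (\<Sum>i<K. glc.sig m n E i * glc.tau' m n E (K - 1 - i))"
      if "gl_rel m n E" for E :: "nat \<Rightarrow> nat \<Rightarrow> 'a"
      by (rule glc.tau_form[OF glcI[OF that], unfolded glc.tau1[OF glcI[OF that], symmetric]])
  qed
  show ?thesis unfolding K_def[symmetric] Inv_def
  proof (intro conjI allI impI)
    fix t assume "t \<le> Suc K"
    then show "rep m n (Suc K) (\<lambda>(emb::complex\<Rightarrow>'a) E. glc.tau' m n E t)"
      using T Tle by (cases "t = Suc K") auto
  next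
    fix t assume "t + 2 \<le> Suc K"
    then show "rep m n (Suc K) (\<lambda>(emb::complex\<Rightarrow>'a) E. glc.sig m n E t)"
      using S Sle[of t] by (cases "t = L") (auto simp: K_def)
  qed
qed

lemma Inv_all: "1 \<le> K \<Longrightarrow> Inv m n K TYPE('a::ring_1)"
proof (induction K rule: nat_induct_at_least)
  case base then show ?case by (rule Inv1)
next
  case (Suc K) then show ?case using Inv_step[of m n "K - 1"] by simp
qed


theorem theorem15:
  fixes m n :: nat
  shows "(\<forall>k. \<exists>P. pvars_le k P \<and>
            (\<forall>(emb :: complex \<Rightarrow> 'a::ring_1) E. complex_alg emb \<and> gl_rel m n E \<longrightarrow>
               tau m n E k = peval emb (Icas m n E) (Ihat m n E) P)) \<and>
         (\<forall>l. \<exists>P. pvars_le (l + 2) P \<and>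
            (\<forall>(emb :: complex \<Rightarrow> 'a::ring_1) E. complex_alg emb \<and> gl_rel m n E \<longrightarrow>
               sigma m n E l = peval emb (Icas m n E) (Ihat m n E) P))"
proof (intro conjI allI)
  fix k
  have "rep m n k (\<lambda>(emb :: complex \<Rightarrow> 'a) E. glc.tau' m n E k)"
  proof (cases "k = 0")
    case True
    show ?thesis unfolding True
      by (rule rep_cong[OF rep_one]) (simp add: glc.tau0[OF glcI])
  next
    case False
    then show ?thesis using InvT[OF Inv_all[of k m n], of k] by simp
  qed
  then have "rep m n k (\<lambda>(emb :: complex \<Rightarrow> 'a) E. tau m n E k)"
    by (rule rep_cong) (simp add: bridge)
  then show "\<exists>P. pvars_le k P \<and>
            (\<forall>(emb :: complex \<Rightarrow> 'a::ring_1) E. complex_alg emb \<and> gl_rel m n E \<longrightarrow>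
               tau m n E k = peval emb (Icas m n E) (Ihat m n E) P)"
    unfolding rep_def .
next
  fix l
  have "rep m n (l + 2) (\<lambda>(emb :: complex \<Rightarrow> 'a) E. glc.sig m n E l)"
    using InvS[OF Inv_all[of "l + 2" m n], of l] by simp
  then have "rep m n (l + 2) (\<lambda>(emb :: complex \<Rightarrow> 'a) E. sigma m n E l)"
    by (rule rep_cong) (simp add: bridge)
  then show "\<exists>P. pvars_le (l + 2) P \<and>
            (\<forall>(emb :: complex \<Rightarrow> 'a::ring_1) E. complex_alg emb \<and> gl_rel m n E \<longrightarrow>
               sigma m n E l = peval emb (Icas m n E) (Ihat m n E) P)"
    unfolding rep_def .
qed

end
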